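(* Let $\mathcal{D}[t]\subset\mathcal{H}\subset\mathcal{D}^\times[t^\times]$ be a rigged Hilbert space with $\mathcal{D}[t]$ complete and reflexive, and suppose it has a strict Riesz-like basis $\{\xi_n\}$, with dual sequence $\{\zeta_n\}\subset\mathcal{D}^\times$. Then the rigged Hilbert space is (equivalent to) a triplet of Hilbert spaces $\mathcal{H}_{+1}\subset\mathcal{H}\subset\mathcal{H}_{-1}$, where $\mathcal{H}_{+1}$ is $\mathcal{D}$ with a Hilbert norm defining a topology equivalent to $t$ and $\mathcal{H}_{-1}$ is its conjugate dual (i.e. $\mathcal{D}^\times$ with the dual Hilbert norm). Moreover, $\{\xi_n\}$ is an orthonormal basis for $\mathcal{H}_{+1}$ and $\{\zeta_n\}$ is an orthonormal basis for $\mathcal{H}_{-1}$.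
   Context: A rigged Hilbert space $\mathcal{D}[t]\subset\mathcal{H}\subset\mathcal{D}^\times[t^\times]$: $\mathcal{D}$ is a dense subspace of the Hilbert space $\mathcal{H}$ with a locally convex topology $t$ finer than the norm topology, $\mathcal{D}^\times$ is the space of continuous conjugate-linear functionals on $\mathcal{D}[t]$ with the strong dual topology $t^\times=\beta(\mathcal{D}^\times,\mathcal{D})$, and $\mathcal{H}\subset\mathcal{D}^\times$ with the duality form $\langle\Phi,f\rangle$ extending the inner product. A Schauder basis of $\mathcal{D}[t]$ is a sequence $\{\xi_n\}$ such that every $f\in\mathcal{D}$ has a unique expansion $f=\sum c_n\xi_n$ converging in $\mathcal{D}[t]$ with $t$-continuous coefficient functionals; writing $c_n(f)=\overline{\langle\zeta_n,f\rangle}$ with $\zeta_n\in\mathcal{D}^\times$ defines the dual sequence $\{\zeta_n\}$ (biorthogonal: $\langle\zeta_n,\xi_k\rangle=\delta_{n,k}$). $\mathcal{C}(\mathcal{D},\mathcal{H})$ denotes linear maps $\mathcal{D}\to\mathcal{H}$ continuous from $\mathcal{D}[t]$ into $\mathcal{H}$; $\mathcal{C}(\mathcal{H},\mathcal{D})$ denotes continuous linear maps from $\mathcal{H}$ into $\mathcal{D}[t]$. A Schauder basis $\{\xi_n\}$ is a Riesz-like basis if there is a one-to-one $T\in\mathcal{C}(\mathcal{D},\mathcal{H})$ with $\{T\xi_n\}$ an orthonormal basis of $\mathcal{H}$; it is a strict Riesz-like basis if moreover $T$ has a continuous inverse $T^{-1}\in\mathcal{C}(\mathcal{H},\mathcal{D})$.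 *)

theory Defs
  imports "HOL-Analysis.Analysis" "HOL-Library.Function_Algebras"
begin

class complex_vector = ab_group_add +
  fixes scaleC :: "complex \<Rightarrow> 'a \<Rightarrow> 'a" (infixr \<open>*\<^sub>C\<close> 75)
  assumes scaleC_add_right: "a *\<^sub>C (x + y) = a *\<^sub>C x + a *\<^sub>C y"
    and scaleC_add_left: "(a + b) *\<^sub>C x = a *\<^sub>C x + b *\<^sub>C x"
    and scaleC_scaleC: "a *\<^sub>C (b *\<^sub>C x) = (a * b) *\<^sub>C x"
    and scaleC_one: "1 *\<^sub>C x = x"

instantiation complex :: complex_vector
begin
definition scaleC_complex_def: "a *\<^sub>C (z::complex) = a * z"
instance by standard (auto simp: scaleC_complex_def algebra_simps)
end

instantiation "fun" :: (type, complex_vector) complex_vector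
begin
definition scaleC_fun_def: "a *\<^sub>C f = (\<lambda>x. a *\<^sub>C f x)"
instance by standard (auto simp: scaleC_fun_def scaleC_add_right scaleC_add_left scaleC_scaleC scaleC_one)
end

text \<open>A complex inner product space (pre-Hilbert space); the inner product is linear
  in the first and conjugate-linear in the second argument, and the norm is the inner
  product norm.  A complex Hilbert space is a type of class
  \<open>{complex_inner, complete_space}\<close>.\<close>
class complex_inner = complex_vector + real_normed_vector +
  fixes cinner :: "'a \<Rightarrow> 'a \<Rightarrow> complex"
  assumes scaleR_scaleC: "scaleR r x = complex_of_real r *\<^sub>C x"
    and cinner_commute: "cinner x y = cnj (cinner y x)"
    and cinner_add_left: "cinner (x + y) z = cinner x z + cinner y z"
    and cinner_scaleC_left: "cinner (a *\<^sub>C x) y = a * cinner x y"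
    and cinner_ge_zero: "0 \<le> Re (cinner x x)"
    and cinner_eq_zero_iff: "cinner x x = 0 \<longleftrightarrow> x = 0"
    and norm_eq_sqrt_cinner: "norm x = sqrt (Re (cinner x x))"

definition csubspace :: "'a::complex_vector set \<Rightarrow> bool" where
  "csubspace V \<longleftrightarrow> 0 \<in> V \<and> (\<forall>x\<in>V. \<forall>y\<in>V. x + y \<in> V) \<and> (\<forall>a. \<forall>x\<in>V. a *\<^sub>C x \<in> V)"

definition clinear_on :: "'a::complex_vector set \<Rightarrow> ('a \<Rightarrow> 'b::complex_vector) \<Rightarrow> bool" where
  "clinear_on V f \<longleftrightarrow> (\<forall>x\<in>V. \<forall>y\<in>V. f (x + y) = f x + f y) \<and> (\<forall>a. \<forall>x\<in>V. f (a *\<^sub>C x) = a *\<^sub>C f x)"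

definition conjlinear_on :: "'a::complex_vector set \<Rightarrow> ('a \<Rightarrow> complex) \<Rightarrow> bool" where
  "conjlinear_on V f \<longleftrightarrow> (\<forall>x\<in>V. \<forall>y\<in>V. f (x + y) = f x + f y) \<and> (\<forall>a. \<forall>x\<in>V. f (a *\<^sub>C x) = cnj a * f x)"

definition seminorm_on :: "'a::complex_vector set \<Rightarrow> ('a \<Rightarrow> real) \<Rightarrow> bool" where
  "seminorm_on V p \<longleftrightarrow> (\<forall>x\<in>V. 0 \<le> p x) \<and> (\<forall>x\<in>V. \<forall>y\<in>V. p (x + y) \<le> p x + p y)
     \<and> (\<forall>a. \<forall>x\<in>V. p (a *\<^sub>C x) = cmod a * p x)"

definition sn_open :: "'a::complex_vector set \<Rightarrow> ('a \<Rightarrow> real) set \<Rightarrow> 'a set \<Rightarrow> bool" where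
  "sn_open V P U \<longleftrightarrow> U \<subseteq> V \<and> (\<forall>x\<in>U. \<exists>F e. finite F \<and> F \<subseteq> P \<and> 0 < e \<and>
      {y\<in>V. \<forall>p\<in>F. p (y - x) < e} \<subseteq> U)"

lemma sn_open_Int:
  assumes S: "sn_open V P S" and T: "sn_open V P T" shows "sn_open V P (S \<inter> T)"
proof -
  have "\<exists>F e. finite F \<and> F \<subseteq> P \<and> 0 < e \<and> {y\<in>V. \<forall>p\<in>F. p (y - x) < e} \<subseteq> S \<inter> T"
    if x: "x \<in> S \<inter> T" for x
  proof -
    from S x have "\<exists>F e. finite F \<and> F \<subseteq> P \<and> 0 < e \<and> {y\<in>V. \<forall>p\<in>F. p (y - x) < e} \<subseteq> S"
      unfolding sn_open_def by (meson IntD1)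
    then obtain F1 e1 where 1: "finite F1" "F1 \<subseteq> P" "0 < e1" "{y\<in>V. \<forall>p\<in>F1. p (y - x) < e1} \<subseteq> S"
      by blast
    from T x have "\<exists>F e. finite F \<and> F \<subseteq> P \<and> 0 < e \<and> {y\<in>V. \<forall>p\<in>F. p (y - x) < e} \<subseteq> T"
      unfolding sn_open_def by (meson IntD2)
    then obtain F2 e2 where 2: "finite F2" "F2 \<subseteq> P" "0 < e2" "{y\<in>V. \<forall>p\<in>F2. p (y - x) < e2} \<subseteq> T"
      by blast
    have "{y\<in>V. \<forall>p\<in>F1 \<union> F2. p (y - x) < min e1 e2} \<subseteq> S \<inter> T"
    proof
      fix y assume y: "y \<in> {y\<in>V. \<forall>p\<in>F1 \<union> F2. p (y - x) < min e1 e2}"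
      then have "y \<in> {y\<in>V. \<forall>p\<in>F1. p (y - x) < e1}" "y \<in> {y\<in>V. \<forall>p\<in>F2. p (y - x) < e2}" by auto
      then show "y \<in> S \<inter> T" using 1(4) 2(4) by blast
    qed
    then show ?thesis using 1 2 by (intro exI[of _ "F1 \<union> F2"] exI[of _ "min e1 e2"]) auto
  qed
  moreover have "S \<inter> T \<subseteq> V" using S unfolding sn_open_def by blast
  ultimately show ?thesis unfolding sn_open_def by blast
qed

lemma sn_open_Union:
  assumes K: "\<forall>U\<in>K. sn_open V P U" shows "sn_open V P (\<Union>K)"
proof -
  have "\<exists>F e. finite F \<and> F \<subseteq> P \<and> 0 < e \<and> {y\<in>V. \<forall>p\<in>F. p (y - x) < e} \<subseteq> \<Union>K"
    if "x \<in> \<Union>K" for x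
  proof -
    from that obtain U where U: "U \<in> K" "x \<in> U" by blast
    with K have "\<exists>F e. finite F \<and> F \<subseteq> P \<and> 0 < e \<and> {y\<in>V. \<forall>p\<in>F. p (y - x) < e} \<subseteq> U"
      unfolding sn_open_def by blast
    with U(1) show ?thesis by blast
  qed
  moreover have "\<Union>K \<subseteq> V" using K unfolding sn_open_def by blast
  ultimately show ?thesis unfolding sn_open_def by blast
qed

lemma istopology_sn_open: "istopology (sn_open V P)"
  unfolding istopology_def using sn_open_Int sn_open_Union by blast

definition seminorm_topology :: "'a::complex_vector set \<Rightarrow> ('a \<Rightarrow> real) set \<Rightarrow> 'a topology" where
  "seminorm_topology V P = topology (sn_open V P)"

definition lc_topology :: "'a::complex_vector set \<Rightarrow> 'a topology \<Rightarrow> bool" where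
  "lc_topology V t \<longleftrightarrow> csubspace V \<and>
     (\<exists>P. (\<forall>p\<in>P. seminorm_on V p) \<and> t = seminorm_topology V P)"

definition tvs_bounded :: "'a::complex_vector topology \<Rightarrow> 'a set \<Rightarrow> bool" where
  "tvs_bounded t B \<longleftrightarrow> B \<subseteq> topspace t \<and>
     (\<forall>U. openin t U \<and> 0 \<in> U \<longrightarrow> (\<exists>s>0. \<forall>a. s \<le> cmod a \<longrightarrow> B \<subseteq> (\<lambda>x. a *\<^sub>C x) ` U))"

text \<open>\<open>V\<^sup>\<times>\<close>: continuous conjugate-linear functionals on \<open>V[t]\<close>; they are represented as
  functions vanishing outside \<open>V\<close>.  The duality form is \<open>\<langle>\<Phi>, f\<rangle> = \<Phi> f\<close>.\<close>
definition cdual :: "'a::complex_vector set \<Rightarrow> 'a topology \<Rightarrow> ('a \<Rightarrow> complex) set" where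
  "cdual V t = {\<Phi>. conjlinear_on V \<Phi> \<and> continuous_map t euclidean \<Phi> \<and> (\<forall>x. x \<notin> V \<longrightarrow> \<Phi> x = 0)}"

definition strong_dual :: "'a::complex_vector set \<Rightarrow> 'a topology \<Rightarrow> ('a \<Rightarrow> complex) topology" where
  "strong_dual V t = seminorm_topology (cdual V t)
     {(\<lambda>\<Phi>. Sup (insert 0 ((\<lambda>f. cmod (\<Phi> f)) ` B))) | B. B \<subseteq> V \<and> tvs_bounded t B}"

definition canonical_bidual :: "'a::complex_vector set \<Rightarrow> 'a topology \<Rightarrow> 'a \<Rightarrow> (('a \<Rightarrow> complex) \<Rightarrow> complex)" where
  "canonical_bidual V t f = (\<lambda>\<Phi>. if \<Phi> \<in> cdual V t then cnj (\<Phi> f) else 0)"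

definition reflexive_lcs :: "'a::complex_vector set \<Rightarrow> 'a topology \<Rightarrow> bool" where
  "reflexive_lcs V t \<longleftrightarrow>
     homeomorphic_map t (strong_dual (cdual V t) (strong_dual V t)) (canonical_bidual V t)"

definition tvs_cauchy_filter :: "'a::complex_vector topology \<Rightarrow> 'a filter \<Rightarrow> bool" where
  "tvs_cauchy_filter t F \<longleftrightarrow> F \<noteq> bot \<and> eventually (\<lambda>x. x \<in> topspace t) F \<and>
     (\<forall>U. openin t U \<and> 0 \<in> U \<longrightarrow> (\<exists>A. eventually (\<lambda>x. x \<in> A) F \<and> (\<forall>x\<in>A. \<forall>y\<in>A. x - y \<in> U)))"

definition complete_tvs :: "'a::complex_vector topology \<Rightarrow> bool" where
  "complete_tvs t \<longleftrightarrow> (\<forall>F. tvs_cauchy_filter t F \<longrightarrow> (\<exists>a. limitin t (\<lambda>x. x) a F))"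

definition schauder_coeffs :: "'a::complex_vector topology \<Rightarrow> (nat \<Rightarrow> 'a) \<Rightarrow> 'a \<Rightarrow> nat \<Rightarrow> complex" where
  "schauder_coeffs t \<xi> f = (THE c. limitin t (\<lambda>N. \<Sum>n<N. c n *\<^sub>C \<xi> n) f sequentially)"

definition schauder_basis :: "'a::complex_vector set \<Rightarrow> 'a topology \<Rightarrow> (nat \<Rightarrow> 'a) \<Rightarrow> bool" where
  "schauder_basis V t \<xi> \<longleftrightarrow> range \<xi> \<subseteq> V \<and>
     (\<forall>f\<in>V. \<exists>!c. limitin t (\<lambda>N. \<Sum>n<N. c n *\<^sub>C \<xi> n) f sequentially) \<and>
     (\<forall>n. continuous_map t euclidean (\<lambda>f. schauder_coeffs t \<xi> f n))"

definition ip_norm :: "('a \<Rightarrow> 'a \<Rightarrow> complex) \<Rightarrow> 'a \<Rightarrow> real" where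
  "ip_norm ip x = sqrt (Re (ip x x))"

definition onb_on :: "'a::complex_vector set \<Rightarrow> ('a \<Rightarrow> 'a \<Rightarrow> complex) \<Rightarrow> (nat \<Rightarrow> 'a) \<Rightarrow> bool" where
  "onb_on V ip e \<longleftrightarrow> range e \<subseteq> V \<and> (\<forall>n m. ip (e n) (e m) = (if n = m then 1 else 0)) \<and>
     (\<forall>x\<in>V. \<forall>\<epsilon>>0. \<exists>N c. ip_norm ip (x - (\<Sum>n<N. c n *\<^sub>C e n)) < \<epsilon>)"

definition hilbert_ip_on :: "'a::complex_vector set \<Rightarrow> ('a \<Rightarrow> 'a \<Rightarrow> complex) \<Rightarrow> bool" where
  "hilbert_ip_on V ip \<longleftrightarrow> csubspace V \<and>
     (\<forall>x\<in>V. \<forall>y\<in>V. ip x y = cnj (ip y x)) \<and>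
     (\<forall>x\<in>V. \<forall>y\<in>V. \<forall>z\<in>V. ip (x + y) z = ip x z + ip y z) \<and>
     (\<forall>a. \<forall>x\<in>V. \<forall>y\<in>V. ip (a *\<^sub>C x) y = a * ip x y) \<and>
     (\<forall>x\<in>V. 0 \<le> Re (ip x x) \<and> (ip x x = 0 \<longleftrightarrow> x = 0)) \<and>
     (\<forall>s. (\<forall>n. s n \<in> V) \<and> (\<forall>\<epsilon>>0. \<exists>N. \<forall>m\<ge>N. \<forall>n\<ge>N. ip_norm ip (s m - s n) < \<epsilon>)
          \<longrightarrow> (\<exists>x\<in>V. (\<lambda>n. ip_norm ip (s n - x)) \<longlonglongrightarrow> 0))"

text \<open>\<open>D[t] \<subseteq> H \<subseteq> D\<^sup>\<times>[t\<^sup>\<times>]\<close>, with \<open>H\<close> the ambient Hilbert space (the type \<open>'h\<close>):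
  \<open>D\<close> dense subspace, \<open>t\<close> locally convex on \<open>D\<close> and finer than the norm topology.
  \<open>H\<close> is embedded in \<open>D\<^sup>\<times>\<close> by \<open>h_embed\<close>, so the duality form extends the inner product.\<close>
definition h_embed :: "'h::complex_inner set \<Rightarrow> 'h \<Rightarrow> ('h \<Rightarrow> complex)" where
  "h_embed D h = (\<lambda>g. if g \<in> D then cinner h g else 0)"

definition rigged_hilbert_space :: "'h::{complex_inner,complete_space} set \<Rightarrow> 'h topology \<Rightarrow> bool" where
  "rigged_hilbert_space D t \<longleftrightarrow> csubspace D \<and> closure D = UNIV \<and> lc_topology D t \<and>
     (\<forall>U. openin (top_of_set D) U \<longrightarrow> openin t U) \<and>
     (\<forall>h. h_embed D h \<in> cdual D t) \<and> inj (h_embed D)"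

definition strict_riesz_like_basis :: "'h::{complex_inner,complete_space} set \<Rightarrow> 'h topology \<Rightarrow> (nat \<Rightarrow> 'h) \<Rightarrow> bool" where
  "strict_riesz_like_basis D t \<xi> \<longleftrightarrow> schauder_basis D t \<xi> \<and>
     (\<exists>T :: 'h \<Rightarrow> 'h. clinear_on D T \<and> inj_on T D \<and> continuous_map t euclidean T \<and>
        onb_on UNIV cinner (T \<circ> \<xi>) \<and>
        T ` D = UNIV \<and> continuous_map euclidean t (inv_into D T))"

end

theory Submission
  imports Defs
begin

lemma scaleC_zero_left [simp]: "(0::complex) *\<^sub>C (x::'a::complex_vector) = 0"
proof -
  have "0 *\<^sub>C x + 0 *\<^sub>C x = (0 + 0) *\<^sub>C x" by (rule scaleC_add_left[symmetric])
  then have "0 *\<^sub>C x + 0 *\<^sub>C x = 0 *\<^sub>C x" by simp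
  then show ?thesis by (rule add_cancel_left_right[THEN iffD1])
qed

lemma scaleC_zero_right [simp]: "a *\<^sub>C (0::'a::complex_vector) = 0"
proof -
  have "a *\<^sub>C 0 + a *\<^sub>C 0 = a *\<^sub>C (0 + (0::'a))" by (rule scaleC_add_right[symmetric])
  then have "a *\<^sub>C 0 + a *\<^sub>C 0 = a *\<^sub>C (0::'a)" by simp
  then show ?thesis by (rule add_cancel_left_right[THEN iffD1])
qed

lemma scaleC_minus_left: "(- a) *\<^sub>C (x::'a::complex_vector) = - (a *\<^sub>C x)"
proof -
  have "(-a) *\<^sub>C x + a *\<^sub>C x = (-a + a) *\<^sub>C x" by (rule scaleC_add_left[symmetric])
  then have "(-a) *\<^sub>C x + a *\<^sub>C x = 0" by simp
  then show ?thesis by (rule eq_neg_iff_add_eq_0[THEN iffD2])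
qed

lemma scaleC_minus_right: "a *\<^sub>C (- x::'a::complex_vector) = - (a *\<^sub>C x)"
proof -
  have "a *\<^sub>C (-x) + a *\<^sub>C x = a *\<^sub>C (-x + x)" by (rule scaleC_add_right[symmetric])
  then have "a *\<^sub>C (-x) + a *\<^sub>C x = 0" by simp
  then show ?thesis by (rule eq_neg_iff_add_eq_0[THEN iffD2])
qed

lemma scaleC_diff_right: "a *\<^sub>C (x - y::'a::complex_vector) = a *\<^sub>C x - a *\<^sub>C y"
  by (simp only: diff_conv_add_uminus scaleC_add_right scaleC_minus_right)

lemma scaleC_diff_left: "(a - b) *\<^sub>C (x::'a::complex_vector) = a *\<^sub>C x - b *\<^sub>C x"
  by (simp only: diff_conv_add_uminus scaleC_add_left scaleC_minus_left)

lemma scaleC_sum_right: "a *\<^sub>C (\<Sum>i\<in>A. f i) = (\<Sum>i\<in>A. a *\<^sub>C (f i::'a::complex_vector))"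
  by (induction A rule: infinite_finite_induct) (auto simp: scaleC_add_right)

lemma neg_one_scaleC: "(-1) *\<^sub>C (x::'a::complex_vector) = - x"
  by (simp add: scaleC_minus_left scaleC_one)

lemma cinner_add_right: "cinner x (y + z) = cinner x y + cinner (x::'a::complex_inner) z"
  by (simp add: cinner_commute[of x "y+z"] cinner_commute[of x y] cinner_commute[of x z] cinner_add_left)

lemma cinner_scaleC_right: "cinner x (a *\<^sub>C y) = cnj a * cinner (x::'a::complex_inner) y"
  by (simp add: cinner_commute[of x "a *\<^sub>C y"] cinner_commute[of x y] cinner_scaleC_left)

lemma cinner_zero_left [simp]: "cinner 0 (x::'a::complex_inner) = 0"
  using cinner_scaleC_left[of 0 0 x] by simp

lemma cinner_zero_right [simp]: "cinner x (0::'a::complex_inner) = 0"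
  by (simp add: cinner_commute[of x 0])

lemma cinner_minus_left: "cinner (- x) (y::'a::complex_inner) = - cinner x y"
  using cinner_scaleC_left[of "-1" x y] by (simp add: neg_one_scaleC)

lemma cinner_minus_right: "cinner x (- y::'a::complex_inner) = - cinner x y"
  by (simp add: cinner_commute[of x "-y"] cinner_commute[of x y] cinner_minus_left)

lemma cinner_diff_left: "cinner (x - y) (z::'a::complex_inner) = cinner x z - cinner y z"
  by (simp only: diff_conv_add_uminus cinner_add_left cinner_minus_left)

lemma cinner_diff_right: "cinner x (y - z::'a::complex_inner) = cinner x y - cinner x z"
  by (simp only: diff_conv_add_uminus cinner_add_right cinner_minus_right)

lemma cinner_sum_left: "cinner (\<Sum>i\<in>A. f i) (y::'a::complex_inner) = (\<Sum>i\<in>A. cinner (f i) y)"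
  by (induction A rule: infinite_finite_induct) (auto simp: cinner_add_left)

lemma cinner_sum_right: "cinner y (\<Sum>i\<in>A. f i) = (\<Sum>i\<in>A. cinner (y::'a::complex_inner) (f i))"
  by (induction A rule: infinite_finite_induct) (auto simp: cinner_add_right)

lemma cinner_self_Im: "Im (cinner x (x::'a::complex_inner)) = 0"
proof -
  have "Im (cinner x x) = Im (cnj (cinner x x))" using cinner_commute[of x x] by (rule arg_cong)
  then show ?thesis by simp
qed

lemma cinner_self: "cinner x (x::'a::complex_inner) = complex_of_real ((norm x)\<^sup>2)"
proof -
  have "(norm x)\<^sup>2 = Re (cinner x x)" by (simp add: norm_eq_sqrt_cinner cinner_ge_zero)
  then show ?thesis by (simp add: complex_eq_iff cinner_self_Im)
qed

lemma norm_scaleC: "norm (a *\<^sub>C x) = cmod a * norm (x::'a::complex_inner)"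
proof -
  have "(norm (a *\<^sub>C x))\<^sup>2 = Re (cinner (a *\<^sub>C x) (a *\<^sub>C x))" by (simp add: norm_eq_sqrt_cinner cinner_ge_zero)
  also have "\<dots> = Re (a * (cnj a * cinner x x))" by (simp only: cinner_scaleC_left cinner_scaleC_right mult.left_commute[of "cnj a" a])
  also have "a * (cnj a * cinner x x) = (a * cnj a) * cinner x x" by (rule mult.assoc[symmetric])
  also have "\<dots> = complex_of_real ((cmod a)\<^sup>2 * (norm x)\<^sup>2)" by (simp only: complex_norm_square[symmetric] cinner_self of_real_mult)
  also have "Re \<dots> = (cmod a)\<^sup>2 * (norm x)\<^sup>2" by (rule Re_complex_of_real)
  finally have "(norm (a *\<^sub>C x))\<^sup>2 = (cmod a * norm x)\<^sup>2" by (simp add: power_mult_distrib)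
  then show ?thesis by (simp add: power2_eq_iff_nonneg)
qed

lemma cauchy_schwarz: "cmod (cinner x y) \<le> norm x * norm (y::'a::complex_inner)"
proof (cases "y = 0")
  case True then show ?thesis by simp
next
  case False
  define c where "c = cinner x y"
  define n where "n = (norm y)\<^sup>2"
  have n: "n > 0" using False by (simp add: n_def)
  define a where "a = c / complex_of_real n"
  have yy: "cinner y y = complex_of_real n" by (simp add: n_def cinner_self)
  have yx: "cinner y x = cnj c" by (simp add: c_def cinner_commute[of y x])
  have "cinner (x - a *\<^sub>C y) (x - a *\<^sub>C y) = cinner x x - cnj a * c - a * cnj c + a * cnj a * complex_of_real n"
    by (simp add: cinner_diff_left cinner_diff_right cinner_scaleC_left cinner_scaleC_right yy yx c_def[symmetric] algebra_simps)
  also have "\<dots> = cinner x x - c * cnj c / complex_of_real n"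
    using n by (simp add: a_def field_simps)
  finally have "0 \<le> Re (cinner x x - c * cnj c / complex_of_real n)"
    by (metis cinner_ge_zero)
  then have "(cmod c)\<^sup>2 / n \<le> (norm x)\<^sup>2"
    by (simp add: cinner_self complex_mult_cnj Re_divide_of_real cmod_power2)
  then have "(cmod c)\<^sup>2 \<le> (norm x * norm y)\<^sup>2"
    using n by (simp add: n_def field_simps power_mult_distrib)
  then show ?thesis unfolding c_def
    by (rule power2_le_imp_le) simp
qed


lemma topspace_seminorm_topology: "topspace (seminorm_topology V P) = V"
proof -
  have "\<exists>F e. finite F \<and> F \<subseteq> P \<and> 0 < e \<and> {y\<in>V. \<forall>p\<in>F. p (y - x) < e} \<subseteq> V" for x
    by (rule exI[of _ "{}"], rule exI[of _ "1::real"]) auto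
  then have "sn_open V P V" unfolding sn_open_def by blast
  moreover have "\<And>U. sn_open V P U \<Longrightarrow> U \<subseteq> V" unfolding sn_open_def by blast
  ultimately show ?thesis unfolding topspace_def seminorm_topology_def
    by (auto simp: istopology_sn_open)
qed

lemma openin_seminorm_topology: "openin (seminorm_topology V P) U = sn_open V P U"
  by (simp add: seminorm_topology_def istopology_sn_open)

lemma ip_norm_cinner: "ip_norm cinner x = norm (x::'a::complex_inner)"
  by (simp add: ip_norm_def norm_eq_sqrt_cinner)

lemma bounded_linear_cinner_left: "bounded_linear (\<lambda>x. cinner x (y::'a::complex_inner))"
proof (rule bounded_linear_intro[where K="norm y"])
  fix x z :: 'a show "cinner (x + z) y = cinner x y + cinner z y" by (rule cinner_add_left)
next
  fix r x show "cinner (r *\<^sub>R x) y = r *\<^sub>R cinner x y"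
    by (simp add: scaleR_scaleC cinner_scaleC_left scaleR_conv_of_real)
next
  fix x show "norm (cinner x y) \<le> norm x * norm y" by (rule cauchy_schwarz)
qed

lemma bounded_linear_cinner_right: "bounded_linear (\<lambda>y. cinner (x::'a::complex_inner) y)"
proof (rule bounded_linear_intro[where K="norm x"])
  fix y z :: 'a show "cinner x (y + z) = cinner x y + cinner x z" by (rule cinner_add_right)
next
  fix r y show "cinner x (r *\<^sub>R y) = r *\<^sub>R cinner x y"
    by (simp add: scaleR_scaleC cinner_scaleC_right scaleR_conv_of_real)
next
  fix y show "norm (cinner x y) \<le> norm y * norm x" using cauchy_schwarz[of x y] by (simp add: mult.commute)
qed

lemma tendsto_cinner_left: "(X \<longlongrightarrow> x) F \<Longrightarrow> ((\<lambda>n. cinner (X n) y) \<longlongrightarrow> cinner x (y::'a::complex_inner)) F"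
  using bounded_linear.tendsto[OF bounded_linear_cinner_left] .

lemma tendsto_cinner_right: "(X \<longlongrightarrow> x) F \<Longrightarrow> ((\<lambda>n. cinner y (X n)) \<longlongrightarrow> cinner (y::'a::complex_inner) x) F"
  using bounded_linear.tendsto[OF bounded_linear_cinner_right] .

lemma continuous_on_cinner_right: "continuous_on A (\<lambda>y. cinner (x::'a::complex_inner) y)"
  by (rule linear_continuous_on[OF bounded_linear_cinner_right])

locale rig =
  fixes D :: "'h::{complex_inner,complete_space} set" and t :: "'h topology" and T :: "'h \<Rightarrow> 'h"
  assumes sub: "csubspace D"
    and lin: "clinear_on D T" and injT: "inj_on T D" and contT: "continuous_map t euclidean T"
    and surjT: "T ` D = UNIV" and contS: "continuous_map euclidean t (inv_into D T)"
    and top: "topspace t = D"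
begin

abbreviation "S \<equiv> inv_into D T"

lemma D0: "0 \<in> D" and Dadd: "x \<in> D \<Longrightarrow> y \<in> D \<Longrightarrow> x + y \<in> D" and Dscale: "x \<in> D \<Longrightarrow> a *\<^sub>C x \<in> D"
  using sub unfolding csubspace_def by auto

lemma Dminus: "x \<in> D \<Longrightarrow> - x \<in> D"
  using Dscale[of x "-1"] by (simp add: neg_one_scaleC)

lemma Ddiff: "x \<in> D \<Longrightarrow> y \<in> D \<Longrightarrow> x - y \<in> D"
  by (simp only: diff_conv_add_uminus Dadd Dminus)

lemma Dsum: "(\<And>i. i \<in> A \<Longrightarrow> f i \<in> D) \<Longrightarrow> sum f A \<in> D"
  by (induction A rule: infinite_finite_induct) (auto simp: D0 Dadd)

lemma Tadd: "x \<in> D \<Longrightarrow> y \<in> D \<Longrightarrow> T (x + y) = T x + T y"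
  using lin unfolding clinear_on_def by blast

lemma Tscale: "x \<in> D \<Longrightarrow> T (a *\<^sub>C x) = a *\<^sub>C T x"
  using lin unfolding clinear_on_def by blast

lemma T0 [simp]: "T 0 = 0"
  using Tscale[OF D0, of 0] by simp

lemma Tminus: "x \<in> D \<Longrightarrow> T (- x) = - T x"
  using Tscale[of x "-1"] by (simp add: neg_one_scaleC)

lemma Tdiff: "x \<in> D \<Longrightarrow> y \<in> D \<Longrightarrow> T (x - y) = T x - T y"
  by (simp only: diff_conv_add_uminus Tadd Dminus Tminus)

lemma Tsum: "(\<And>i. i \<in> A \<Longrightarrow> f i \<in> D) \<Longrightarrow> T (sum f A) = (\<Sum>i\<in>A. T (f i))"
proof (induction A rule: infinite_finite_induct)
  case (insert x F)
  then show ?case by (simp add: Tadd Dsum)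
qed auto

lemma S_in: "S h \<in> D"
  by (metis UNIV_I inv_into_into surjT)

lemma TS [simp]: "T (S h) = h"
  by (metis UNIV_I f_inv_into_f surjT)

lemma ST: "x \<in> D \<Longrightarrow> S (T x) = x"
  by (simp add: injT)

lemma T_eq0: "x \<in> D \<Longrightarrow> T x = 0 \<longleftrightarrow> x = 0"
  by (metis D0 T0 injT inj_onD)

lemma nbhd:
  assumes U: "openin t U" and x: "x \<in> U"
  shows "\<exists>e>0. \<forall>y\<in>D. norm (T y - T x) < e \<longrightarrow> y \<in> U"
proof -
  have "openin euclidean {h \<in> topspace euclidean. S h \<in> U}"
    by (rule openin_continuous_map_preimage[OF contS U])
  hence op: "open {h. S h \<in> U}" by simp
  have xD: "x \<in> D" using U x openin_subset top by blast
  have "T x \<in> {h. S h \<in> U}" using x ST[OF xD] by simp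
  then obtain e where e: "e > 0" "ball (T x) e \<subseteq> {h. S h \<in> U}"
    using op open_contains_ball by blast
  show ?thesis
  proof (intro exI[of _ e] conjI ballI impI e)
    fix y assume "y \<in> D" "norm (T y - T x) < e"
    then have "T y \<in> ball (T x) e" by (simp add: dist_norm norm_minus_commute)
    then show "y \<in> U" using e ST \<open>y \<in> D\<close> by auto
  qed
qed

lemma t_eq: "t = seminorm_topology D {\<lambda>x. norm (T x)}"
proof (subst topology_eq, intro allI iffI)
  fix U assume U: "openin t U"
  have "U \<subseteq> D" using U openin_subset top by blast
  moreover have "\<exists>F e. finite F \<and> F \<subseteq> {\<lambda>x. norm (T x)} \<and> 0 < e \<and> {y\<in>D. \<forall>p\<in>F. p (y - x) < e} \<subseteq> U"
    if x: "x \<in> U" for x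
  proof -
    obtain e where e: "e > 0" "\<forall>y\<in>D. norm (T y - T x) < e \<longrightarrow> y \<in> U" using nbhd[OF U x] by blast
    have xD: "x \<in> D" using x \<open>U \<subseteq> D\<close> by blast
    have "{y\<in>D. \<forall>p\<in>{\<lambda>x. norm (T x)}. p (y - x) < e} \<subseteq> U"
      using e xD by (auto simp: Tdiff)
    then show ?thesis using e by (intro exI[of _ "{\<lambda>x. norm (T x)}"] exI[of _ e]) auto
  qed
  ultimately show "openin (seminorm_topology D {\<lambda>x. norm (T x)}) U"
    unfolding openin_seminorm_topology sn_open_def by blast
next
  fix U assume "openin (seminorm_topology D {\<lambda>x. norm (T x)}) U"
  then have U: "sn_open D {\<lambda>x. norm (T x)} U" by (simp add: openin_seminorm_topology)
  have UD: "U \<subseteq> D" using U unfolding sn_open_def by blast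
  have "open (T ` U)"
    unfolding open_contains_ball
  proof
    fix h assume "h \<in> T ` U"
    then obtain x where x: "x \<in> U" "h = T x" by blast
    then obtain F e where F: "finite F" "F \<subseteq> {\<lambda>x. norm (T x)}" "0 < e" "{y\<in>D. \<forall>p\<in>F. p (y - x) < e} \<subseteq> U"
      using U unfolding sn_open_def by blast
    have "ball h e \<subseteq> T ` U"
    proof
      fix h' assume "h' \<in> ball h e"
      then have d: "norm (h' - h) < e" by (simp add: dist_norm norm_minus_commute)
      have xD: "x \<in> D" using x UD by blast
      have "T (S h' - x) = h' - T x" using Tdiff[OF S_in xD] by simp
      then have "\<forall>p\<in>F. p (S h' - x) < e"
        using F(2) d x by auto
      then have "S h' \<in> U" using F(4) S_in by blast
      then show "h' \<in> T ` U" by (metis TS image_eqI)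
    qed
    then show "\<exists>e>0. ball h e \<subseteq> T ` U" using F(3) by blast
  qed
  then have "openin t {x \<in> topspace t. T x \<in> T ` U}"
    by (intro openin_continuous_map_preimage[OF contT]) simp
  moreover have "{x \<in> topspace t. T x \<in> T ` U} = U"
    using UD top injT by (auto simp: inj_on_image_mem_iff dest: inj_onD)
  ultimately show "openin t U" by simp
qed

lemma cdual_zero: "\<Phi> \<in> cdual D t \<Longrightarrow> \<Phi> 0 = 0"
  unfolding cdual_def conjlinear_on_def using D0
  by (metis (mono_tags, lifting) complex_cnj_zero mem_Collect_eq mult_zero_left scaleC_zero_left)

lemma cdual_bounded:
  assumes \<Phi>: "\<Phi> \<in> cdual D t"
  shows "\<exists>K>0. \<forall>f\<in>D. cmod (\<Phi> f) \<le> K * norm (T f)"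
proof -
  have cont: "continuous_map t euclidean \<Phi>" and cl: "conjlinear_on D \<Phi>"
    using \<Phi> unfolding cdual_def by auto
  define U where "U = {f \<in> topspace t. \<Phi> f \<in> ball 0 1}"
  have U: "openin t U" unfolding U_def by (rule openin_continuous_map_preimage[OF cont]) simp
  have "0 \<in> U" unfolding U_def using top D0 cdual_zero[OF \<Phi>] by simp
  then obtain e where e: "e > 0" "\<forall>y\<in>D. norm (T y - T 0) < e \<longrightarrow> y \<in> U"
    using nbhd[OF U] by blast
  have small: "cmod (\<Phi> y) < 1" if "y \<in> D" "norm (T y) < e" for y
    using e that by (auto simp: U_def)
  show ?thesis
  proof (intro exI[of _ "2/e"] conjI ballI)
    show "0 < 2/e" using e by simp
  next
    fix f assume f: "f \<in> D"
    show "cmod (\<Phi> f) \<le> 2 / e * norm (T f)"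
    proof (cases "T f = 0")
      case True
      then have "f = 0" using T_eq0 f by blast
      then show ?thesis using cdual_zero[OF \<Phi>] by simp
    next
      case False
      define l where "l = e / (2 * norm (T f))"
      have l: "l > 0" using False e by (simp add: l_def)
      have yD: "complex_of_real l *\<^sub>C f \<in> D" using f Dscale by blast
      have "norm (T (complex_of_real l *\<^sub>C f)) = l * norm (T f)"
        using f l by (simp add: Tscale norm_scaleC)
      also have "\<dots> = e / 2" using False by (simp add: l_def)
      finally have "norm (T (complex_of_real l *\<^sub>C f)) < e" using e by simp
      then have "cmod (\<Phi> (complex_of_real l *\<^sub>C f)) < 1" using small yD by blast
      moreover have "\<Phi> (complex_of_real l *\<^sub>C f) = complex_of_real l * \<Phi> f"
        using cl f unfolding conjlinear_on_def by simp
      ultimately have "l * cmod (\<Phi> f) < 1" using l by (simp add: norm_mult)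
      then have "cmod (\<Phi> f) < 1 / l" using l by (simp add: field_simps)
      also have "1 / l = 2 / e * norm (T f)" using e by (simp add: l_def)
      finally show ?thesis by simp
    qed
  qed
qed

end


lemma sum_split_ivl: "n \<le> m \<Longrightarrow> sum f {..<m} = sum f {..<n} + sum f {n..<(m::nat)}"
  using sum.atLeastLessThan_concat[of 0 n m f] by (simp add: lessThan_atLeast0)

locale rigb = rig D t T for D :: "'h::{complex_inner,complete_space} set" and t T +
  fixes \<xi> :: "nat \<Rightarrow> 'h"
  assumes schauder: "schauder_basis D t \<xi>"
    and onb: "onb_on UNIV cinner (T \<circ> \<xi>)"
begin

lemma xiD: "\<xi> n \<in> D" using schauder unfolding schauder_basis_def by auto

lemma orth: "cinner (T (\<xi> n)) (T (\<xi> m)) = (if n = m then 1 else 0)"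
  using onb unfolding onb_on_def by auto

abbreviation coef where "coef f \<equiv> schauder_coeffs t \<xi> f"

lemma expansion: "f \<in> D \<Longrightarrow> limitin t (\<lambda>N. \<Sum>n<N. coef f n *\<^sub>C \<xi> n) f sequentially"
proof -
  assume "f \<in> D"
  then have "\<exists>!c. limitin t (\<lambda>N. \<Sum>n<N. c n *\<^sub>C \<xi> n) f sequentially"
    using schauder unfolding schauder_basis_def by blast
  then show ?thesis unfolding schauder_coeffs_def by (rule theI')
qed

lemma T_expansion: "f \<in> D \<Longrightarrow> ((\<lambda>N. \<Sum>n<N. coef f n *\<^sub>C T (\<xi> n)) \<longlongrightarrow> T f) sequentially"
proof -
  assume f: "f \<in> D"
  have "limitin euclidean (T \<circ> (\<lambda>N. \<Sum>n<N. coef f n *\<^sub>C \<xi> n)) (T f) sequentially"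
    by (rule continuous_map_limit[OF contT expansion[OF f]])
  moreover have "(T \<circ> (\<lambda>N. \<Sum>n<N. coef f n *\<^sub>C \<xi> n)) = (\<lambda>N. \<Sum>n<N. coef f n *\<^sub>C T (\<xi> n))"
    by (auto simp: fun_eq_iff Tsum Tscale Dscale xiD)
  ultimately show ?thesis by simp
qed

lemma cdual_sum:
  assumes \<Phi>: "\<Phi> \<in> cdual D t" and g: "\<And>i. i \<in> A \<Longrightarrow> g i \<in> D"
  shows "\<Phi> (\<Sum>i\<in>A. a i *\<^sub>C g i) = (\<Sum>i\<in>A. cnj (a i) * \<Phi> (g i))"
  using g
proof (induction A rule: infinite_finite_induct)
  case (infinite A) then show ?case using cdual_zero[OF \<Phi>] by simp
next
  case empty then show ?case using cdual_zero[OF \<Phi>] by simp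
next
  case (insert x F)
  have cl: "conjlinear_on D \<Phi>" using \<Phi> unfolding cdual_def by blast
  have xD: "a x *\<^sub>C g x \<in> D" using insert Dscale by blast
  have FD: "(\<Sum>i\<in>F. a i *\<^sub>C g i) \<in> D" using insert Dscale by (intro Dsum) auto
  have "\<Phi> (\<Sum>i\<in>insert x F. a i *\<^sub>C g i) = \<Phi> (a x *\<^sub>C g x) + \<Phi> (\<Sum>i\<in>F. a i *\<^sub>C g i)"
    using insert cl xD FD unfolding conjlinear_on_def by simp
  also have "\<Phi> (a x *\<^sub>C g x) = cnj (a x) * \<Phi> (g x)"
    using cl insert unfolding conjlinear_on_def by simp
  finally show ?case using insert by simp
qed

lemma Phi_expansion:
  assumes \<Phi>: "\<Phi> \<in> cdual D t" and f: "f \<in> D"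
  shows "((\<lambda>N. \<Sum>n<N. cnj (coef f n) * \<Phi> (\<xi> n)) \<longlongrightarrow> \<Phi> f) sequentially"
proof -
  have cont: "continuous_map t euclidean \<Phi>" using \<Phi> unfolding cdual_def by blast
  have "limitin euclidean (\<Phi> \<circ> (\<lambda>N. \<Sum>n<N. coef f n *\<^sub>C \<xi> n)) (\<Phi> f) sequentially"
    by (rule continuous_map_limit[OF cont expansion[OF f]])
  moreover have "(\<Phi> \<circ> (\<lambda>N. \<Sum>n<N. coef f n *\<^sub>C \<xi> n)) = (\<lambda>N. \<Sum>n<N. cnj (coef f n) * \<Phi> (\<xi> n))"
    by (auto simp: fun_eq_iff cdual_sum[OF \<Phi>] xiD)
  ultimately show ?thesis by simp
qed

lemma cinner_e_sum_right:
  assumes "finite A"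
  shows "cinner (T (\<xi> k)) (\<Sum>n\<in>A. c n *\<^sub>C T (\<xi> n)) = (if k \<in> A then cnj (c k) else 0)"
proof -
  have "cinner (T (\<xi> k)) (\<Sum>n\<in>A. c n *\<^sub>C T (\<xi> n)) = (\<Sum>n\<in>A. (if k = n then cnj (c n) else 0))"
    by (simp add: cinner_sum_right cinner_scaleC_right orth if_distrib cong: if_cong)
  also have "\<dots> = (if k \<in> A then cnj (c k) else 0)" using assms by simp
  finally show ?thesis .
qed

lemma cinner_e_sum_left:
  assumes "finite A"
  shows "cinner (\<Sum>n\<in>A. c n *\<^sub>C T (\<xi> n)) (T (\<xi> k)) = (if k \<in> A then c k else 0)"
proof -
  have "cinner (\<Sum>n\<in>A. c n *\<^sub>C T (\<xi> n)) (T (\<xi> k)) = (\<Sum>n\<in>A. (if n = k then c n else 0))"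
    by (simp add: cinner_sum_left cinner_scaleC_left orth if_distrib cong: if_cong)
  also have "\<dots> = (if k \<in> A then c k else 0)" using assms by simp
  finally show ?thesis .
qed

lemma pyth:
  assumes "finite A"
  shows "(norm (\<Sum>n\<in>A. c n *\<^sub>C T (\<xi> n)))\<^sup>2 = (\<Sum>n\<in>A. (cmod (c n))\<^sup>2)"
proof -
  let ?s = "\<Sum>n\<in>A. c n *\<^sub>C T (\<xi> n)"
  have "cinner ?s ?s = (\<Sum>m\<in>A. c m * cinner (T (\<xi> m)) ?s)"
    by (simp add: cinner_sum_left cinner_scaleC_left)
  also have "\<dots> = (\<Sum>m\<in>A. c m * cnj (c m))"
    using assms by (intro sum.cong) (auto simp: cinner_e_sum_right)
  also have "\<dots> = (\<Sum>m\<in>A. complex_of_real ((cmod (c m))\<^sup>2))"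
    by (simp only: complex_norm_square)
  finally have "complex_of_real ((norm ?s)\<^sup>2) = complex_of_real (\<Sum>m\<in>A. (cmod (c m))\<^sup>2)"
    by (simp add: cinner_self)
  then show ?thesis using of_real_eq_iff by blast
qed

lemma riesz:
  assumes \<Phi>: "\<Phi> \<in> cdual D t"
  shows "\<exists>r. \<forall>f\<in>D. \<Phi> f = cinner r (T f)"
proof -
  obtain K where K: "K > 0" "\<forall>f\<in>D. cmod (\<Phi> f) \<le> K * norm (T f)"
    using cdual_bounded[OF \<Phi>] by blast
  define a where "a n = \<Phi> (\<xi> n)" for n
  define P where "P N = (\<Sum>n<N. (cmod (a n))\<^sup>2)" for N
  have bessel: "P N \<le> K\<^sup>2" for N
  proof -
    define h where "h = (\<Sum>n<N. a n *\<^sub>C \<xi> n)"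
    have hD: "h \<in> D" unfolding h_def using xiD Dscale by (intro Dsum) auto
    have "\<Phi> h = (\<Sum>n<N. cnj (a n) * a n)"
      unfolding h_def by (simp add: cdual_sum[OF \<Phi>] xiD a_def)
    also have "\<dots> = complex_of_real (P N)"
      by (simp only: P_def of_real_sum complex_norm_square mult.commute)
    finally have Ph0: "\<Phi> h = complex_of_real (P N)" .
    have P0: "P N \<ge> 0" unfolding P_def by (intro sum_nonneg) simp
    have Ph: "cmod (\<Phi> h) = P N" using Ph0 P0 by simp
    have "(norm (T h))\<^sup>2 = P N"
      unfolding h_def P_def by (simp add: Tsum Tscale xiD Dscale pyth)
    then have Th: "norm (T h) = sqrt (P N)" by (metis norm_ge_zero real_sqrt_unique)
    have "P N \<le> K * sqrt (P N)" using K(2) hD Ph Th by metis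
    moreover have sq: "sqrt (P N) * sqrt (P N) = P N" using P0 by simp
    ultimately have le: "sqrt (P N) * sqrt (P N) \<le> K * sqrt (P N)" by linarith
    have "sqrt (P N) \<le> K"
    proof (cases "sqrt (P N) = 0")
      case True then show ?thesis using K(1) by simp
    next
      case False then have "sqrt (P N) > 0" using P0 by simp
      then show ?thesis using le mult_right_le_imp_le by blast
    qed
    then have "(sqrt (P N))\<^sup>2 \<le> K\<^sup>2" by (rule power_mono) (simp add: P0)
    then show ?thesis using P0 by simp
  qed
  have summ: "summable (\<lambda>n. (cmod (a n))\<^sup>2)"
    using bessel unfolding P_def by (intro summableI_nonneg_bounded) auto
  then have "convergent P" unfolding P_def using summable_LIMSEQ convergent_def by blast
  then have CP: "Cauchy P" using Cauchy_convergent_iff by blast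
  define s where "s N = (\<Sum>n<N. a n *\<^sub>C T (\<xi> n))" for N
  have sdiff: "(norm (s m - s n))\<^sup>2 = P m - P n" if "n \<le> m" for m n
  proof -
    have "s m - s n = (\<Sum>k\<in>{n..<m}. a k *\<^sub>C T (\<xi> k))"
      unfolding s_def using sum_split_ivl[OF that, of "\<lambda>k. a k *\<^sub>C T (\<xi> k)"] by simp
    then have "(norm (s m - s n))\<^sup>2 = (\<Sum>k\<in>{n..<m}. (cmod (a k))\<^sup>2)" by (simp add: pyth)
    also have "\<dots> = P m - P n" unfolding P_def using sum_split_ivl[OF that, of "\<lambda>k. (cmod (a k))\<^sup>2"] by simp
    finally show ?thesis .
  qed
  have "Cauchy s"
  proof (rule CauchyI)
    fix e :: real assume e: "e > 0"
    then have "e\<^sup>2 > 0" by simp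
    then obtain M where M: "\<forall>m\<ge>M. \<forall>n\<ge>M. norm (P m - P n) < e\<^sup>2"
      using CauchyD[OF CP] by blast
    have "norm (s m - s n) < e" if "m \<ge> M" "n \<ge> M" for m n
    proof -
      have sq: "(norm (s m - s n))\<^sup>2 < e\<^sup>2"
      proof (cases "n \<le> m")
        case True
        have "norm (P m - P n) < e\<^sup>2" using M that by blast
        then show ?thesis using sdiff[OF True] by simp
      next
        case False
        then have "n \<ge> m" by simp
        have "norm (P n - P m) < e\<^sup>2" using M that by blast
        then show ?thesis using sdiff[OF \<open>n \<ge> m\<close>] by (simp add: norm_minus_commute)
      qed
      then show ?thesis using power_less_imp_less_base[OF sq] e by simp
    qed
    then show "\<exists>M. \<forall>m\<ge>M. \<forall>n\<ge>M. norm (s m - s n) < e" by blast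
  qed
  then obtain r where r: "s \<longlonglongrightarrow> r" using Cauchy_convergent_iff convergent_def by blast
  have ra: "cinner r (T (\<xi> k)) = a k" for k
  proof -
    have "(\<lambda>M. cinner (s M) (T (\<xi> k))) \<longlonglongrightarrow> cinner r (T (\<xi> k))"
      by (rule tendsto_cinner_left[OF r])
    moreover have "(\<lambda>M. cinner (s M) (T (\<xi> k))) \<longlonglongrightarrow> a k"
    proof (rule tendsto_eventually)
      show "\<forall>\<^sub>F M in sequentially. cinner (s M) (T (\<xi> k)) = a k"
        unfolding eventually_sequentially s_def
        by (intro exI[of _ "Suc k"]) (auto simp: cinner_e_sum_left)
    qed
    ultimately show ?thesis using LIMSEQ_unique by blast
  qed
  have "\<Phi> f = cinner r (T f)" if f: "f \<in> D" for f
  proof -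
    have "(\<lambda>N. cinner r (\<Sum>n<N. coef f n *\<^sub>C T (\<xi> n))) \<longlonglongrightarrow> cinner r (T f)"
      by (rule tendsto_cinner_right[OF T_expansion[OF f]])
    moreover have "(\<lambda>N. cinner r (\<Sum>n<N. coef f n *\<^sub>C T (\<xi> n))) = (\<lambda>N. \<Sum>n<N. cnj (coef f n) * \<Phi> (\<xi> n))"
      by (simp add: cinner_sum_right cinner_scaleC_right ra a_def)
    ultimately show ?thesis using Phi_expansion[OF \<Phi> f] LIMSEQ_unique by metis
  qed
  then show ?thesis by blast
qed

end


lemma sn_open_compare:
  assumes cmp: "\<And>F e. finite F \<Longrightarrow> F \<subseteq> P \<Longrightarrow> e > 0 \<Longrightarrow> \<exists>G d. finite G \<and> G \<subseteq> Q \<and> d > 0 \<and>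
      (\<forall>x\<in>V. \<forall>y\<in>V. (\<forall>q\<in>G. q (y - x) < d) \<longrightarrow> (\<forall>p\<in>F. p (y - x) < e))"
    and U: "sn_open V P U"
  shows "sn_open V Q U"
proof -
  have UV: "U \<subseteq> V" using U unfolding sn_open_def by blast
  have "\<exists>G d. finite G \<and> G \<subseteq> Q \<and> 0 < d \<and> {y\<in>V. \<forall>q\<in>G. q (y - x) < d} \<subseteq> U" if x: "x \<in> U" for x
  proof -
    obtain F e where F: "finite F" "F \<subseteq> P" "0 < e" "{y\<in>V. \<forall>p\<in>F. p (y - x) < e} \<subseteq> U"
      using U x unfolding sn_open_def by blast
    obtain G d where G: "finite G" "G \<subseteq> Q" "d > 0"
      "\<forall>x\<in>V. \<forall>y\<in>V. (\<forall>q\<in>G. q (y - x) < d) \<longrightarrow> (\<forall>p\<in>F. p (y - x) < e)"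
      using cmp[OF F(1-3)] by blast
    have "{y\<in>V. \<forall>q\<in>G. q (y - x) < d} \<subseteq> U"
      using G(4) F(4) x UV by blast
    then show ?thesis using G by blast
  qed
  then show ?thesis using UV unfolding sn_open_def by blast
qed

context rigb
begin

definition rep :: "'h \<Rightarrow> 'h \<Rightarrow> complex" where
  "rep r = (\<lambda>f. if f \<in> D then cinner r (T f) else 0)"

lemma rep_cdual: "rep r \<in> cdual D t"
proof -
  have "conjlinear_on D (rep r)"
    unfolding conjlinear_on_def rep_def
    by (auto simp: Dadd Dscale Tadd Tscale cinner_add_right cinner_scaleC_right)
  moreover have "continuous_map t euclidean (rep r)"
  proof -
    have "continuous_map t euclidean (cinner r \<circ> T)"
      by (rule continuous_map_compose[OF contT]) (simp add: continuous_on_cinner_right)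
    then show ?thesis by (rule continuous_map_eq) (auto simp: rep_def top)
  qed
  moreover have "\<forall>x. x \<notin> D \<longrightarrow> rep r x = 0" by (simp add: rep_def)
  ultimately show ?thesis unfolding cdual_def by blast
qed

lemma cdual_ex: assumes \<Phi>: "\<Phi> \<in> cdual D t" shows "\<exists>r. \<Phi> = rep r"
proof -
  obtain r where r: "\<forall>f\<in>D. \<Phi> f = cinner r (T f)" using riesz[OF \<Phi>] by blast
  have "\<forall>x. x \<notin> D \<longrightarrow> \<Phi> x = 0" using \<Phi> unfolding cdual_def by blast
  then have "\<Phi> = rep r" using r by (auto simp: fun_eq_iff rep_def)
  then show ?thesis by blast
qed

lemma cdual_range: "cdual D t = range rep"
  using cdual_ex rep_cdual by blast

lemma rep_inj: assumes "rep r1 = rep r2" shows "r1 = r2"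
proof -
  have "rep r1 (S (r1 - r2)) = rep r2 (S (r1 - r2))" using assms by simp
  then have "cinner r1 (r1 - r2) = cinner r2 (r1 - r2)" using S_in by (simp add: rep_def)
  then have "cinner (r1 - r2) (r1 - r2) = 0" by (simp add: cinner_diff_left)
  then have "r1 - r2 = 0" by (simp only: cinner_eq_zero_iff)
  then show ?thesis by simp
qed

definition R :: "('h \<Rightarrow> complex) \<Rightarrow> 'h" where "R \<Phi> = (SOME r. \<Phi> = rep r)"

lemma R_rep [simp]: "R (rep r) = r"
proof -
  have "rep r = rep (R (rep r))" unfolding R_def by (rule someI_ex) blast
  then show ?thesis using rep_inj by metis
qed

lemma rep_R: "\<Phi> \<in> cdual D t \<Longrightarrow> rep (R \<Phi>) = \<Phi>"
  using cdual_ex by force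

lemma rep_add: "rep r1 + rep r2 = rep (r1 + r2)"
  by (auto simp: rep_def fun_eq_iff cinner_add_left)

lemma rep_scale: "a *\<^sub>C rep r = rep (a *\<^sub>C r)"
  by (auto simp: rep_def fun_eq_iff scaleC_fun_def scaleC_complex_def cinner_scaleC_left)

lemma rep_diff: "rep r1 - rep r2 = rep (r1 - r2)"
  by (auto simp: rep_def fun_eq_iff cinner_diff_left)

lemma rep_zero: "rep 0 = 0"
  by (auto simp: rep_def fun_eq_iff)

lemma rep_sum: "(\<Sum>i\<in>A. rep (g i)) = rep (\<Sum>i\<in>A. g i)"
  by (induction A rule: infinite_finite_induct) (auto simp: rep_zero rep_add)

lemma rep_eq0: "rep r = 0 \<longleftrightarrow> r = 0"
  using rep_inj rep_zero by metis

lemma ip_norm_R: "ip_norm (\<lambda>\<Phi> \<Psi>. cinner (R \<Phi>) (R \<Psi>)) \<Phi> = norm (R \<Phi>)"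
  by (simp add: ip_norm_def norm_eq_sqrt_cinner)

lemma hilbert_cdual: "hilbert_ip_on (cdual D t) (\<lambda>\<Phi> \<Psi>. cinner (R \<Phi>) (R \<Psi>))"
proof -
  have sub: "csubspace (range rep)"
    unfolding csubspace_def
    by (auto simp: rep_add rep_scale rep_zero[symmetric] intro: range_eqI)
  have cauchy: "\<exists>x\<in>range rep. (\<lambda>n. ip_norm (\<lambda>\<Phi> \<Psi>. cinner (R \<Phi>) (R \<Psi>)) (s n - x)) \<longlonglongrightarrow> 0"
    if s: "\<forall>n. s n \<in> range rep"
      and C: "\<forall>\<epsilon>>0. \<exists>N. \<forall>m\<ge>N. \<forall>n\<ge>N. ip_norm (\<lambda>\<Phi> \<Psi>. cinner (R \<Phi>) (R \<Psi>)) (s m - s n) < \<epsilon>" for s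
  proof -
    define u where "u n = R (s n)" for n
    have su: "s n = rep (u n)" for n
    proof -
      obtain r where "s n = rep r" using s by blast
      then show ?thesis unfolding u_def by simp
    qed
    have nd: "ip_norm (\<lambda>\<Phi> \<Psi>. cinner (R \<Phi>) (R \<Psi>)) (s m - rep x) = norm (u m - x)" for m x
      by (simp add: ip_norm_R su rep_diff)
    have "Cauchy u"
    proof (rule CauchyI)
      fix e :: real assume "e > 0"
      then obtain N where "\<forall>m\<ge>N. \<forall>n\<ge>N. ip_norm (\<lambda>\<Phi> \<Psi>. cinner (R \<Phi>) (R \<Psi>)) (s m - s n) < e"
        using C by blast
      then show "\<exists>M. \<forall>m\<ge>M. \<forall>n\<ge>M. norm (u m - u n) < e"
        by (metis nd su)
    qed
    then obtain x where x: "u \<longlonglongrightarrow> x" using Cauchy_convergent_iff convergent_def by blast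
    then have "(\<lambda>n. norm (u n - x)) \<longlonglongrightarrow> 0"
      using LIM_zero tendsto_norm_zero by blast
    then show ?thesis using nd by (intro bexI[of _ "rep x"]) auto
  qed
  show ?thesis
    unfolding hilbert_ip_on_def cdual_range
    using sub cauchy
    by (auto simp: rep_add rep_scale cinner_add_left cinner_scaleC_left cinner_ge_zero rep_eq0
        cinner_eq_zero_iff intro: cinner_commute)
qed

lemma dual_norm_core:
  shows "\<forall>f\<in>D. norm (T f) \<le> 1 \<longrightarrow> cmod (rep r f) \<le> norm r"
    and "\<exists>f\<in>D. norm (T f) \<le> 1 \<and> cmod (rep r f) = norm r"
proof -
  show "\<forall>f\<in>D. norm (T f) \<le> 1 \<longrightarrow> cmod (rep r f) \<le> norm r"
  proof (intro ballI impI)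
    fix f assume "f \<in> D" "norm (T f) \<le> 1"
    then have "cmod (rep r f) \<le> norm r * norm (T f)" using cauchy_schwarz by (simp add: rep_def)
    also have "\<dots> \<le> norm r" using \<open>norm (T f) \<le> 1\<close> by (simp add: mult_left_le)
    finally show "cmod (rep r f) \<le> norm r" .
  qed
  show "\<exists>f\<in>D. norm (T f) \<le> 1 \<and> cmod (rep r f) = norm r"
  proof (cases "r = 0")
    case True then show ?thesis using D0 by (intro bexI[of _ 0]) (auto simp: rep_def)
  next
    case False
    define h where "h = complex_of_real (1 / norm r) *\<^sub>C r"
    have nh: "norm h = 1" using False by (simp add: h_def norm_scaleC norm_divide)
    have "rep r (S h) = cinner r h" using S_in by (simp add: rep_def)
    also have "\<dots> = complex_of_real (1 / norm r) * cinner r r" by (simp add: h_def cinner_scaleC_right)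
    also have "\<dots> = complex_of_real (norm r)" using False
      by (simp add: cinner_self power2_eq_square)
    finally have "cmod (rep r (S h)) = norm r" by simp
    then show ?thesis using S_in nh by (intro bexI[of _ "S h"]) auto
  qed
qed

lemma dual_norm: "norm r = Sup {cmod (rep r f) |f. f \<in> D \<and> norm (T f) \<le> 1}"
proof -
  obtain f0 where f0: "f0 \<in> D" "norm (T f0) \<le> 1" "cmod (rep r f0) = norm r" using dual_norm_core(2) by blast
  show ?thesis
  proof (rule cSup_eq_maximum[symmetric])
    show "norm r \<in> {cmod (rep r f) |f. f \<in> D \<and> norm (T f) \<le> 1}" using f0 by force
  qed (use dual_norm_core(1) in auto)
qed

lemma dual_norm_B0: "Sup (insert 0 ((\<lambda>f. cmod (rep r f)) ` {f \<in> D. norm (T f) \<le> 1})) = norm r"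
proof -
  obtain f0 where f0: "f0 \<in> D" "norm (T f0) \<le> 1" "cmod (rep r f0) = norm r" using dual_norm_core(2) by blast
  show ?thesis
  proof (rule cSup_eq_maximum)
    show "norm r \<in> insert 0 ((\<lambda>f. cmod (rep r f)) ` {f \<in> D. norm (T f) \<le> 1})"
      using f0 by (metis (mono_tags, lifting) image_eqI insertI2 mem_Collect_eq)
  qed (use dual_norm_core(1) in auto)
qed

lemma bounded_T:
  assumes B: "tvs_bounded t B"
  shows "\<exists>M\<ge>0. \<forall>f\<in>B. norm (T f) \<le> M"
proof -
  define U where "U = {f \<in> topspace t. T f \<in> ball 0 1}"
  have U: "openin t U" unfolding U_def by (rule openin_continuous_map_preimage[OF contT]) simp
  have "0 \<in> U" unfolding U_def using top D0 by simp
  then obtain s where s: "s > 0" "\<forall>a. s \<le> cmod a \<longrightarrow> B \<subseteq> (\<lambda>x. a *\<^sub>C x) ` U"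
    using B U unfolding tvs_bounded_def by blast
  have BU: "B \<subseteq> (\<lambda>x. complex_of_real s *\<^sub>C x) ` U" using s by simp
  have "norm (T f) \<le> s" if fB: "f \<in> B" for f
  proof -
    obtain u where u: "u \<in> U" "f = complex_of_real s *\<^sub>C u" using BU fB by blast
    have uD: "u \<in> D" using u top unfolding U_def by blast
    have "norm (T u) < 1" using u unfolding U_def by simp
    then have "s * norm (T u) \<le> s" using s by simp
    then show ?thesis using u uD s by (simp add: Tscale norm_scaleC)
  qed
  then show ?thesis using s by (intro exI[of _ s]) auto
qed

lemma B0_bounded: "tvs_bounded t {f \<in> D. norm (T f) \<le> 1}"
  unfolding tvs_bounded_def
proof (intro conjI allI impI)
  show "{f \<in> D. norm (T f) \<le> 1} \<subseteq> topspace t" using top by blast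
next
  fix U assume "openin t U \<and> 0 \<in> U"
  then obtain e where e: "e > 0" "\<forall>y\<in>D. norm (T y - T 0) < e \<longrightarrow> y \<in> U"
    using nbhd by blast
  show "\<exists>s>0. \<forall>a. s \<le> cmod a \<longrightarrow> {f \<in> D. norm (T f) \<le> 1} \<subseteq> (\<lambda>x. a *\<^sub>C x) ` U"
  proof (intro exI[of _ "2/e"] conjI allI impI subsetI)
    show "0 < 2/e" using e by simp
  next
    fix a f assume a: "2 / e \<le> cmod a" and f: "f \<in> {f \<in> D. norm (T f) \<le> 1}"
    have a0: "a \<noteq> 0" using a e by auto
    have apos: "cmod a > 0" using a0 by simp
    define u where "u = inverse a *\<^sub>C f"
    have uD: "u \<in> D" using f Dscale unfolding u_def by blast
    have "norm (T u) = norm (T f) / cmod a" using f by (simp add: u_def Tscale norm_scaleC norm_inverse divide_inverse mult.commute)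
    also have "\<dots> \<le> 1 / cmod a" using f apos by (simp add: divide_right_mono)
    also have "\<dots> \<le> e / 2" using a e apos by (simp add: field_simps)
    also have "\<dots> < e" using e by simp
    finally have "u \<in> U" using e uD by simp
    moreover have "a *\<^sub>C u = f" using a0 by (simp add: u_def scaleC_scaleC scaleC_one)
    ultimately show "f \<in> (\<lambda>x. a *\<^sub>C x) ` U" by force
  qed
qed

end


context rigb
begin

lemma dens: "\<epsilon> > 0 \<Longrightarrow> \<exists>N c. ip_norm cinner (x - (\<Sum>n<N. c n *\<^sub>C (T \<circ> \<xi>) n)) < \<epsilon>"
  using onb unfolding onb_on_def by blast

lemma ip_norm_R_fun: "ip_norm (\<lambda>\<Phi> \<Psi>. cinner (R \<Phi>) (R \<Psi>)) = (\<lambda>\<Phi>. norm (R \<Phi>))"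
  by (simp add: fun_eq_iff ip_norm_R)

lemma strong_bound:
  assumes B: "B \<subseteq> D" "tvs_bounded t B"
  shows "\<exists>M\<ge>0. \<forall>r. Sup (insert 0 ((\<lambda>f. cmod (rep r f)) ` B)) \<le> M * norm r"
proof -
  obtain M where M: "M \<ge> 0" "\<forall>f\<in>B. norm (T f) \<le> M" using bounded_T[OF B(2)] by blast
  have "Sup (insert 0 ((\<lambda>f. cmod (rep r f)) ` B)) \<le> M * norm r" for r
  proof (rule cSup_least)
    fix x assume "x \<in> insert 0 ((\<lambda>f. cmod (rep r f)) ` B)"
    then consider "x = 0" | f where "f \<in> B" "x = cmod (rep r f)" by blast
    then show "x \<le> M * norm r"
    proof cases
      case 1 then show ?thesis using M by simp
    next
      case 2
      then have "x = cmod (cinner r (T f))" using B by (auto simp: rep_def)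
      also have "\<dots> \<le> norm r * norm (T f)" by (rule cauchy_schwarz)
      also have "\<dots> \<le> norm r * M" using M 2 by (simp add: mult_left_mono)
      finally show ?thesis by (simp add: mult.commute)
    qed
  qed simp
  then show ?thesis using M by blast
qed

lemma strong_eq:
  "seminorm_topology (cdual D t) {ip_norm (\<lambda>\<Phi> \<Psi>. cinner (R \<Phi>) (R \<Psi>))} = strong_dual D t"
proof -
  define N where "N = (\<lambda>\<Phi>. norm (R \<Phi>))"
  define Pb where "Pb = {(\<lambda>\<Phi>. Sup (insert 0 ((\<lambda>f. cmod (\<Phi> f)) ` B))) | B. B \<subseteq> D \<and> tvs_bounded t B}"
  have diff: "\<exists>r. y - x = rep r" if "x \<in> cdual D t" "y \<in> cdual D t" for x y
    using that unfolding cdual_range by (auto simp: rep_diff)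
  have a: "sn_open (cdual D t) Pb U" if "sn_open (cdual D t) {N} U" for U
  proof (rule sn_open_compare[OF _ that])
    fix F e assume F: "finite F" "F \<subseteq> {N}" "(e::real) > 0"
    define B0 where "B0 = {f \<in> D. norm (T f) \<le> 1}"
    define p0 where "p0 = (\<lambda>\<Phi>. Sup (insert 0 ((\<lambda>f. cmod (\<Phi> f)) ` B0)))"
    have p0: "p0 \<in> Pb" unfolding Pb_def p0_def B0_def using B0_bounded by blast
    have "(\<forall>q\<in>{p0}. q (y - x) < e) \<longrightarrow> (\<forall>p\<in>F. p (y - x) < e)"
      if xy: "x \<in> cdual D t" "y \<in> cdual D t" for x y
    proof -
      obtain r where r: "y - x = rep r" using diff[OF xy] by blast
      have "p0 (rep r) = N (rep r)" unfolding p0_def B0_def N_def using dual_norm_B0 by simp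
      then show ?thesis using F(2) r by auto
    qed
    then show "\<exists>G d. finite G \<and> G \<subseteq> Pb \<and> d > 0 \<and>
      (\<forall>x\<in>cdual D t. \<forall>y\<in>cdual D t. (\<forall>q\<in>G. q (y - x) < d) \<longrightarrow> (\<forall>p\<in>F. p (y - x) < e))"
      using p0 F(3) by (intro exI[of _ "{p0}"] exI[of _ e]) auto
  qed
  have b: "sn_open (cdual D t) {N} U" if "sn_open (cdual D t) Pb U" for U
  proof (rule sn_open_compare[OF _ that])
    fix F e assume F: "finite F" "F \<subseteq> Pb" "(e::real) > 0"
    have "\<forall>p\<in>F. \<exists>M. M \<ge> 0 \<and> (\<forall>r. p (rep r) \<le> M * norm r)"
    proof
      fix p assume "p \<in> F"
      then obtain B where B: "B \<subseteq> D" "tvs_bounded t B" "p = (\<lambda>\<Phi>. Sup (insert 0 ((\<lambda>f. cmod (\<Phi> f)) ` B)))"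
        using F(2) unfolding Pb_def by blast
      show "\<exists>M. M \<ge> 0 \<and> (\<forall>r. p (rep r) \<le> M * norm r)"
        using strong_bound[OF B(1,2)] B(3) by simp
    qed
    then obtain Mf where Mf: "\<forall>p\<in>F. Mf p \<ge> 0 \<and> (\<forall>r. p (rep r) \<le> Mf p * norm r)"
      by metis
    define Sm where "Sm = (\<Sum>p\<in>F. Mf p)"
    have Sm0: "Sm \<ge> 0" unfolding Sm_def using Mf by (intro sum_nonneg) auto
    have MS: "Mf p \<le> Sm" if "p \<in> F" for p
      unfolding Sm_def using Mf that F(1) by (intro member_le_sum) auto
    define d where "d = e / (1 + Sm)"
    have d: "d > 0" using F(3) Sm0 by (simp add: d_def)
    have Sd: "Sm * d < e"
    proof -
      have "Sm * d < (1 + Sm) * d" using d by simp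
      also have "\<dots> = e" using Sm0 by (simp add: d_def)
      finally show ?thesis .
    qed
    have "(\<forall>q\<in>{N}. q (y - x) < d) \<longrightarrow> (\<forall>p\<in>F. p (y - x) < e)"
      if xy: "x \<in> cdual D t" "y \<in> cdual D t" for x y
    proof (intro impI ballI)
      fix p assume Nd: "\<forall>q\<in>{N}. q (y - x) < d" and p: "p \<in> F"
      obtain r where r: "y - x = rep r" using diff[OF xy] by blast
      have nr: "norm r < d" using Nd r by (simp add: N_def)
      have "p (rep r) \<le> Mf p * norm r" using Mf p by blast
      also have "\<dots> \<le> Sm * norm r" using MS[OF p] by (simp add: mult_right_mono)
      also have "\<dots> \<le> Sm * d" using nr Sm0 by (simp add: mult_left_mono)
      finally show "p (y - x) < e" using Sd r by simp
    qed
    then show "\<exists>G d. finite G \<and> G \<subseteq> {N} \<and> d > 0 \<and>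
      (\<forall>x\<in>cdual D t. \<forall>y\<in>cdual D t. (\<forall>q\<in>G. q (y - x) < d) \<longrightarrow> (\<forall>p\<in>F. p (y - x) < e))"
      using d by (intro exI[of _ "{N}"] exI[of _ d]) auto
  qed
  show ?thesis
    unfolding strong_dual_def ip_norm_R_fun N_def[symmetric] Pb_def[symmetric]
    using a b by (subst topology_eq) (auto simp: openin_seminorm_topology)
qed

lemma zeta_rep:
  assumes z: "\<zeta> \<in> cdual D t" and c: "\<And>f. f \<in> D \<Longrightarrow> coef f n = cnj (\<zeta> f)"
  shows "\<zeta> = rep (T (\<xi> n))"
proof
  fix f show "\<zeta> f = rep (T (\<xi> n)) f"
  proof (cases "f \<in> D")
    case False then show ?thesis using z unfolding cdual_def rep_def by auto
  next
    case f: True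
    have "(\<lambda>N. cinner (T (\<xi> n)) (\<Sum>k<N. coef f k *\<^sub>C T (\<xi> k))) \<longlonglongrightarrow> cinner (T (\<xi> n)) (T f)"
      by (rule tendsto_cinner_right[OF T_expansion[OF f]])
    moreover have "(\<lambda>N. cinner (T (\<xi> n)) (\<Sum>k<N. coef f k *\<^sub>C T (\<xi> k))) \<longlonglongrightarrow> \<zeta> f"
    proof (rule tendsto_eventually)
      show "\<forall>\<^sub>F N in sequentially. cinner (T (\<xi> n)) (\<Sum>k<N. coef f k *\<^sub>C T (\<xi> k)) = \<zeta> f"
        unfolding eventually_sequentially
        by (intro exI[of _ "Suc n"]) (auto simp: cinner_e_sum_right c[OF f])
    qed
    ultimately have "\<zeta> f = cinner (T (\<xi> n)) (T f)" using LIMSEQ_unique by blast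
    then show ?thesis using f by (simp add: rep_def)
  qed
qed

lemma ip1_norm: "ip_norm (\<lambda>x y. cinner (T x) (T y)) = (\<lambda>x. norm (T x))"
  by (simp add: fun_eq_iff ip_norm_def norm_eq_sqrt_cinner)

lemma hilbert_D: "hilbert_ip_on D (\<lambda>x y. cinner (T x) (T y))"
proof -
  have cauchy: "\<exists>x\<in>D. (\<lambda>n. norm (T (s n - x))) \<longlonglongrightarrow> 0"
    if s: "\<forall>n. s n \<in> D" and C: "\<forall>\<epsilon>>0. \<exists>N. \<forall>m\<ge>N. \<forall>n\<ge>N. norm (T (s m - s n)) < \<epsilon>" for s
  proof -
    have "Cauchy (\<lambda>n. T (s n))"
    proof (rule CauchyI)
      fix e :: real assume "e > 0"
      then obtain N where "\<forall>m\<ge>N. \<forall>n\<ge>N. norm (T (s m - s n)) < e" using C by blast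
      then show "\<exists>M. \<forall>m\<ge>M. \<forall>n\<ge>M. norm (T (s m) - T (s n)) < e"
        using s by (metis Tdiff)
    qed
    then obtain h where h: "(\<lambda>n. T (s n)) \<longlonglongrightarrow> h" using Cauchy_convergent_iff convergent_def by blast
    then have "(\<lambda>n. norm (T (s n) - h)) \<longlonglongrightarrow> 0"
      using LIM_zero tendsto_norm_zero by blast
    moreover have "T (s n - S h) = T (s n) - h" for n using s S_in by (simp add: Tdiff)
    ultimately show ?thesis using S_in by (intro bexI[of _ "S h"]) auto
  qed
  show ?thesis
    unfolding hilbert_ip_on_def ip1_norm
    using sub cauchy
    by (auto simp: Tadd Tscale cinner_add_left cinner_scaleC_left cinner_ge_zero
        cinner_eq_zero_iff T_eq0 intro: cinner_commute)
qed

lemma onb_D: "onb_on D (\<lambda>x y. cinner (T x) (T y)) \<xi>"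
  unfolding onb_on_def ip1_norm
proof (intro conjI allI ballI impI)
  show "range \<xi> \<subseteq> D" using xiD by blast
next
  fix n m show "cinner (T (\<xi> n)) (T (\<xi> m)) = (if n = m then 1 else 0)" by (rule orth)
next
  fix x :: 'h and \<epsilon> :: real assume x: "x \<in> D" and e: "\<epsilon> > 0"
  obtain N c where "ip_norm cinner (T x - (\<Sum>n<N. c n *\<^sub>C (T \<circ> \<xi>) n)) < \<epsilon>"
    using dens[OF e] by blast
  then have "norm (T (x - (\<Sum>n<N. c n *\<^sub>C \<xi> n))) < \<epsilon>"
    using x by (simp add: ip_norm_cinner Tdiff Tsum Tscale Dsum Dscale xiD)
  then show "\<exists>N c. norm (T (x - (\<Sum>n<N. c n *\<^sub>C \<xi> n))) < \<epsilon>" by blast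
qed

lemma onb_dual:
  assumes z: "\<And>n. \<zeta> n \<in> cdual D t" and c: "\<And>n f. f \<in> D \<Longrightarrow> coef f n = cnj (\<zeta> n f)"
  shows "onb_on (cdual D t) (\<lambda>\<Phi> \<Psi>. cinner (R \<Phi>) (R \<Psi>)) \<zeta>"
proof -
  have zr: "\<zeta> n = rep (T (\<xi> n))" for n by (rule zeta_rep[OF z c])
  show ?thesis
    unfolding onb_on_def ip_norm_R_fun
  proof (intro conjI allI ballI impI)
    show "range \<zeta> \<subseteq> cdual D t" using z by blast
  next
    fix n m show "cinner (R (\<zeta> n)) (R (\<zeta> m)) = (if n = m then 1 else 0)" by (simp add: zr orth)
  next
    fix \<Phi> and \<epsilon> :: real assume \<Phi>: "\<Phi> \<in> cdual D t" and e: "\<epsilon> > 0"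
    obtain N c where Nc: "ip_norm cinner (R \<Phi> - (\<Sum>n<N. c n *\<^sub>C (T \<circ> \<xi>) n)) < \<epsilon>"
      using dens[OF e] by blast
    have "\<Phi> - (\<Sum>n<N. c n *\<^sub>C \<zeta> n) = rep (R \<Phi>) - (\<Sum>n<N. c n *\<^sub>C rep (T (\<xi> n)))"
      using rep_R[OF \<Phi>] zr by simp
    also have "\<dots> = rep (R \<Phi> - (\<Sum>n<N. c n *\<^sub>C T (\<xi> n)))"
      by (simp only: rep_scale rep_sum rep_diff)
    finally have "\<Phi> - (\<Sum>n<N. c n *\<^sub>C \<zeta> n) = rep (R \<Phi> - (\<Sum>n<N. c n *\<^sub>C T (\<xi> n)))" .
    then have "norm (R (\<Phi> - (\<Sum>n<N. c n *\<^sub>C \<zeta> n))) < \<epsilon>"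
      using Nc by (simp add: ip_norm_cinner)
    then show "\<exists>N c. norm (R (\<Phi> - (\<Sum>n<N. c n *\<^sub>C \<zeta> n))) < \<epsilon>" by blast
  qed
qed

end

theorem proposition3p10:
  fixes D :: "'h::{complex_inner,complete_space} set"
    and t :: "'h topology"
    and \<xi> :: "nat \<Rightarrow> 'h"
    and \<zeta> :: "nat \<Rightarrow> ('h \<Rightarrow> complex)"
  assumes rhs: "rigged_hilbert_space D t"
    and complete: "complete_tvs t"
    and reflexive: "reflexive_lcs D t"
    and riesz: "strict_riesz_like_basis D t \<xi>"
    and dual_seq: "\<And>n. \<zeta> n \<in> cdual D t"
    and dual_coeff: "\<And>n f. f \<in> D \<Longrightarrow> schauder_coeffs t \<xi> f n = cnj (\<zeta> n f)"
  shows "\<exists>ip1 ipm.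
           hilbert_ip_on D ip1 \<and> seminorm_topology D {ip_norm ip1} = t \<and>
           hilbert_ip_on (cdual D t) ipm \<and>
           (\<forall>\<Phi>\<in>cdual D t. ip_norm ipm \<Phi> = Sup {cmod (\<Phi> f) | f. f \<in> D \<and> ip_norm ip1 f \<le> 1}) \<and>
           seminorm_topology (cdual D t) {ip_norm ipm} = strong_dual D t \<and>
           onb_on D ip1 \<xi> \<and> onb_on (cdual D t) ipm \<zeta>"
proof -
  obtain T :: "'h \<Rightarrow> 'h" where T: "clinear_on D T" "inj_on T D" "continuous_map t euclidean T"
    "onb_on UNIV cinner (T \<circ> \<xi>)" "T ` D = UNIV" "continuous_map euclidean t (inv_into D T)"
    using riesz unfolding strict_riesz_like_basis_def by blast
  have sch: "schauder_basis D t \<xi>" using riesz unfolding strict_riesz_like_basis_def by blast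
  have sub: "csubspace D" using rhs unfolding rigged_hilbert_space_def by blast
  obtain P where "t = seminorm_topology D P"
    using rhs unfolding rigged_hilbert_space_def lc_topology_def by blast
  then have top: "topspace t = D" by (simp add: topspace_seminorm_topology)
  interpret rigb D t T \<xi>
    by unfold_locales (use T sch sub top in auto)
  show ?thesis
  proof (intro exI[of _ "\<lambda>x y. cinner (T x) (T y)"] exI[of _ "\<lambda>\<Phi> \<Psi>. cinner (R \<Phi>) (R \<Psi>)"] conjI)
    show "hilbert_ip_on D (\<lambda>x y. cinner (T x) (T y))" by (rule hilbert_D)
    show "seminorm_topology D {ip_norm (\<lambda>x y. cinner (T x) (T y))} = t"
      by (simp add: ip1_norm t_eq[symmetric])
    show "hilbert_ip_on (cdual D t) (\<lambda>\<Phi> \<Psi>. cinner (R \<Phi>) (R \<Psi>))" by (rule hilbert_cdual)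
    show "\<forall>\<Phi>\<in>cdual D t. ip_norm (\<lambda>\<Phi> \<Psi>. cinner (R \<Phi>) (R \<Psi>)) \<Phi> =
        Sup {cmod (\<Phi> f) |f. f \<in> D \<and> ip_norm (\<lambda>x y. cinner (T x) (T y)) f \<le> 1}"
    proof
      fix \<Phi> assume \<Phi>: "\<Phi> \<in> cdual D t"
      have "norm (R \<Phi>) = Sup {cmod (rep (R \<Phi>) f) |f. f \<in> D \<and> norm (T f) \<le> 1}" by (rule dual_norm)
      then show "ip_norm (\<lambda>\<Phi> \<Psi>. cinner (R \<Phi>) (R \<Psi>)) \<Phi> =
        Sup {cmod (\<Phi> f) |f. f \<in> D \<and> ip_norm (\<lambda>x y. cinner (T x) (T y)) f \<le> 1}"
        by (simp add: ip_norm_R ip1_norm rep_R[OF \<Phi>])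
    qed
    show "seminorm_topology (cdual D t) {ip_norm (\<lambda>\<Phi> \<Psi>. cinner (R \<Phi>) (R \<Psi>))} = strong_dual D t"
      by (rule strong_eq)
    show "onb_on D (\<lambda>x y. cinner (T x) (T y)) \<xi>" by (rule onb_D)
    show "onb_on (cdual D t) (\<lambda>\<Phi> \<Psi>. cinner (R \<Phi>) (R \<Psi>)) \<zeta>"
      by (rule onb_dual[OF dual_seq dual_coeff])
  qed
qed


end
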